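(* Let $l_2$ be an odd integer with $l_2\ge 3$ and let $G=\Theta(2,l_2,2)$. Then $P_\ell(G,3)=P(G,3)$.
   Context: For positive integers $l_1,l_2,l_3$, the theta graph $\Theta(l_1,l_2,l_3)$ consists of two end vertices joined by three internally disjoint paths of lengths (numbers of edges) $l_1,l_2,l_3$. A $3$-assignment $L$ for $G$ assigns to each vertex $v$ a set $L(v)$ of $3$ colors; $P(G,L)$ is the number of proper colorings $f$ of $G$ with $f(v)\in L(v)$ for all $v$. $P(G,3)$ is the number of proper colorings of $G$ with colors from $\{1,2,3\}$, and $P_\ell(G,3)$ is the minimum of $P(G,L)$ over all $3$-assignments $L$ for $G$. *)

theory Defs
  imports "HOL-Library.FuncSet"
begin

text \<open>Graphs are given by a vertex set V and a set E of edges, each edge a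
two-element set of vertices. Colours are natural numbers.\<close>

definition proper :: "'v set set \<Rightarrow> ('v \<Rightarrow> nat) \<Rightarrow> bool" where
  "proper E f \<longleftrightarrow> (\<forall>e\<in>E. \<forall>x\<in>e. \<forall>y\<in>e. x \<noteq> y \<longrightarrow> f x \<noteq> f y)"

definition P_list :: "'v set \<Rightarrow> 'v set set \<Rightarrow> ('v \<Rightarrow> nat set) \<Rightarrow> nat" where
  "P_list V E L = card {f \<in> Pi\<^sub>E V L. proper E f}"

definition P_chrom3 :: "'v set \<Rightarrow> 'v set set \<Rightarrow> nat" where
  "P_chrom3 V E = P_list V E (\<lambda>_. {1,2,3})"

definition three_assignment :: "'v set \<Rightarrow> ('v \<Rightarrow> nat set) \<Rightarrow> bool" where
  "three_assignment V L \<longleftrightarrow> (\<forall>v\<in>V. card (L v) = 3)"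

definition P_list3 :: "'v set \<Rightarrow> 'v set set \<Rightarrow> nat" where
  "P_list3 V E = Inf {P_list V E L | L. three_assignment V L}"

text \<open>Theta graph Theta(l1,l2,l3): end vertices End0, End1; path i (i = 1,2,3)
has internal vertices Inner i j for 1 \<le> j < l_i.\<close>
datatype theta_vertex = End0 | End1 | Inner nat nat

definition theta_len :: "nat \<Rightarrow> nat \<Rightarrow> nat \<Rightarrow> nat \<Rightarrow> nat" where
  "theta_len l1 l2 l3 i = (if i = 1 then l1 else if i = 2 then l2 else l3)"

definition theta_pv :: "nat \<Rightarrow> nat \<Rightarrow> nat \<Rightarrow> nat \<Rightarrow> nat \<Rightarrow> theta_vertex" where
  "theta_pv l1 l2 l3 i j =
     (if j = 0 then End0 else if j = theta_len l1 l2 l3 i then End1 else Inner i j)"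

definition theta_V :: "nat \<Rightarrow> nat \<Rightarrow> nat \<Rightarrow> theta_vertex set" where
  "theta_V l1 l2 l3 = {End0, End1} \<union>
     {Inner i j | i j. i \<in> {1,2,3} \<and> 1 \<le> j \<and> j < theta_len l1 l2 l3 i}"

definition theta_E :: "nat \<Rightarrow> nat \<Rightarrow> nat \<Rightarrow> theta_vertex set set" where
  "theta_E l1 l2 l3 =
     {{theta_pv l1 l2 l3 i j, theta_pv l1 l2 l3 i (Suc j)} | i j.
        i \<in> {1,2,3} \<and> j < theta_len l1 l2 l3 i}"

end

theory Submission
  imports Defs
begin

fun walks :: "nat \<Rightarrow> nat set list \<Rightarrow> nat \<Rightarrow> nat" where
  "walks c [] d = (if c = d then 0 else 1)"
| "walks c (L # Ls) d = (\<Sum>z\<in>L - {c}. walks z Ls d)"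

fun mm :: "nat \<Rightarrow> nat" where
  "mm 0 = 0"
| "mm (Suc k) = (if even k then 2 * mm k + 1 else 2 * mm k)"

lemma sum3_diff:
  assumes "p \<noteq> q" "q \<noteq> r" "p \<noteq> r"
  shows "(\<Sum>z\<in>{p,q,r} - {c}. (g::nat \<Rightarrow> nat) z) =
    (if c = p then g q + g r else if c = q then g p + g r else if c = r then g p + g q
     else g p + g q + g r)"
  using assms by (auto simp: insert_Diff_if)

lemma walks_inv:
  assumes "\<forall>L\<in>set Ls. card L = 3"
  shows "(\<forall>c. mm (length Ls) \<le> walks c Ls d) \<and>
    (if even (length Ls)
     then (\<forall>c c'. c \<noteq> c' \<longrightarrow> 2 * mm (length Ls) + 1 \<le> walks c Ls d + walks c' Ls d)
     else (\<forall>c1 c2 c3. c1 \<noteq> c2 \<and> c2 \<noteq> c3 \<and> c1 \<noteq> c3 \<longrightarrow>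
             3 * mm (length Ls) + 1 \<le> walks c1 Ls d + walks c2 Ls d + walks c3 Ls d))"
  using assms
proof (induction Ls)
  case Nil
  then show ?case by auto
next
  case (Cons L Ls)
  define g where "g = (\<lambda>z. walks z Ls d)"
  define m where "m = mm (length Ls)"
  from Cons.prems have "card L = 3" by simp
  then obtain p q r where L: "L = {p,q,r}" and d3: "p \<noteq> q" "q \<noteq> r" "p \<noteq> r"
    by (auto simp: card_3_iff)
  have "\<forall>L\<in>set Ls. card L = 3" using Cons.prems by simp
  note IH0 = Cons.IH[OF this]
  have IH: "(\<forall>c. m \<le> g c) \<and> (if even (length Ls)
     then (\<forall>c c'. c \<noteq> c' \<longrightarrow> 2 * m + 1 \<le> g c + g c')
     else (\<forall>c1 c2 c3. c1 \<noteq> c2 \<and> c2 \<noteq> c3 \<and> c1 \<noteq> c3 \<longrightarrow> 3 * m + 1 \<le> g c1 + g c2 + g c3))"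
    unfolding g_def m_def by (rule IH0)
  have W: "\<And>c. walks c (L # Ls) d = (if c = p then g q + g r else if c = q then g p + g r
     else if c = r then g p + g q else g p + g q + g r)"
    using sum3_diff[OF d3, where g=g] by (simp add: L g_def)
  have ge: "m \<le> g p" "m \<le> g q" "m \<le> g r" using IH by auto
  show ?case
  proof (cases "even (length Ls)")
    case True
    then have pr: "2*m+1 \<le> g p + g q" "2*m+1 \<le> g q + g r" "2*m+1 \<le> g p + g r"
      using IH d3 by auto
    have s3: "3*m+2 \<le> g p + g q + g r" using pr by linarith
    have mS: "mm (length (L#Ls)) = 2*m+1" using True by (simp add: m_def)
    have A: "\<forall>c. 2*m+1 \<le> walks c (L # Ls) d" unfolding W using pr ge by auto
    have B: "\<forall>c1 c2 c3. c1 \<noteq> c2 \<and> c2 \<noteq> c3 \<and> c1 \<noteq> c3 \<longrightarrow>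
       3 * (2*m+1) + 1 \<le> walks c1 (L#Ls) d + walks c2 (L#Ls) d + walks c3 (L#Ls) d"
      unfolding W using pr ge d3 by (auto; use s3 in linarith)
    show ?thesis using A B True mS by simp
  next
    case False
    then have s3: "3*m+1 \<le> g p + g q + g r" using IH d3 by auto
    have mS: "mm (length (L#Ls)) = 2*m" using False by (simp add: m_def)
    have A: "\<forall>c. 2*m \<le> walks c (L # Ls) d" unfolding W using s3 ge by auto
    have B: "\<forall>c c'. c \<noteq> c' \<longrightarrow> 2 * (2*m) + 1 \<le> walks c (L#Ls) d + walks c' (L#Ls) d"
      unfolding W using s3 ge d3 by auto
    show ?thesis using A B False mS by simp
  qed
qed

definition PathCol :: "nat \<Rightarrow> nat set list \<Rightarrow> nat \<Rightarrow> nat list set" where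
  "PathCol c Ls d = {xs. list_all2 (\<lambda>x L. x \<in> L) xs Ls \<and> successively (\<noteq>) (c # xs @ [d])}"

lemma PathCol_Nil: "PathCol c [] d = (if c = d then {} else {[]})"
  by (auto simp: PathCol_def)

lemma PathCol_Cons: "PathCol c (L # Ls) d = (\<Union>z\<in>L - {c}. (#) z ` PathCol z Ls d)"
  by (auto simp: PathCol_def list_all2_Cons2)

lemma card_PathCol:
  assumes "\<forall>L\<in>set Ls. finite L"
  shows "finite (PathCol c Ls d) \<and> card (PathCol c Ls d) = walks c Ls d"
  using assms
proof (induction Ls arbitrary: c)
  case Nil
  then show ?case by (simp add: PathCol_Nil)
next
  case (Cons L Ls)
  have fin: "finite L" using Cons.prems by simp
  have IH: "\<And>z. finite (PathCol z Ls d) \<and> card (PathCol z Ls d) = walks z Ls d"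
    using Cons by simp
  have "card (PathCol c (L # Ls) d) = (\<Sum>z\<in>L - {c}. card ((#) z ` PathCol z Ls d))"
    unfolding PathCol_Cons
    by (rule card_UN_disjoint) (use fin IH in auto)
  also have "\<dots> = (\<Sum>z\<in>L - {c}. walks z Ls d)"
    by (rule sum.cong) (auto simp: card_image IH)
  finally show ?case using fin IH by (simp add: PathCol_Cons)
qed

abbreviation pv2 :: "nat \<Rightarrow> nat \<Rightarrow> theta_vertex" where
  "pv2 n j \<equiv> theta_pv 2 n 2 2 j"

lemma mem_V: "v \<in> theta_V 2 n 2 \<longleftrightarrow> v = End0 \<or> v = End1 \<or> v = Inner 1 1 \<or> v = Inner 3 1 \<or>
   (\<exists>j. v = Inner 2 j \<and> 1 \<le> j \<and> j < n)"
  apply (auto simp: theta_V_def theta_len_def)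
   apply (drule spec[of _ 1]; simp)
  apply (drule spec[of _ 3]; simp)
  done

lemma pv_neq:
  assumes "j < theta_len 2 n 2 i" "2 \<le> theta_len 2 n 2 i"
  shows "theta_pv 2 n 2 i j \<noteq> theta_pv 2 n 2 i (Suc j)"
  using assms by (auto simp: theta_pv_def)

lemma proper_gen:
  assumes "3 \<le> n"
  shows "proper (theta_E 2 n 2) f \<longleftrightarrow>
    (\<forall>i\<in>{1,2,3}. \<forall>j<theta_len 2 n 2 i. f (theta_pv 2 n 2 i j) \<noteq> f (theta_pv 2 n 2 i (Suc j)))"
proof -
  have len: "\<And>i. 2 \<le> theta_len 2 n 2 i" using assms by (auto simp: theta_len_def)
  show ?thesis
  proof
    assume H: "proper (theta_E 2 n 2) f"
    show "\<forall>i\<in>{1,2,3}. \<forall>j<theta_len 2 n 2 i. f (theta_pv 2 n 2 i j) \<noteq> f (theta_pv 2 n 2 i (Suc j))"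
    proof (intro ballI allI impI)
      fix i j assume ij: "i \<in> {1,2,3}" "j < theta_len 2 n 2 i"
      then have e: "{theta_pv 2 n 2 i j, theta_pv 2 n 2 i (Suc j)} \<in> theta_E 2 n 2"
        unfolding theta_E_def by (intro CollectI exI[of _ i] exI[of _ j]) simp
      have "theta_pv 2 n 2 i j \<noteq> theta_pv 2 n 2 i (Suc j)" using pv_neq[OF ij(2) len] .
      then show "f (theta_pv 2 n 2 i j) \<noteq> f (theta_pv 2 n 2 i (Suc j))"
        using bspec[OF H[unfolded proper_def] e] by simp
    qed
  next
    assume H: "\<forall>i\<in>{1,2,3}. \<forall>j<theta_len 2 n 2 i. f (theta_pv 2 n 2 i j) \<noteq> f (theta_pv 2 n 2 i (Suc j))"
    show "proper (theta_E 2 n 2) f"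
      unfolding proper_def
    proof (intro ballI impI)
      fix e x y assume "e \<in> theta_E 2 n 2" "x \<in> e" "y \<in> e" "x \<noteq> y"
      then obtain i j where ij: "i \<in> {1,2,3}" "j < theta_len 2 n 2 i"
        and "e = {theta_pv 2 n 2 i j, theta_pv 2 n 2 i (Suc j)}"
        unfolding theta_E_def by blast
      moreover have hf: "f (theta_pv 2 n 2 i j) \<noteq> f (theta_pv 2 n 2 i (Suc j))"
        using H ij by blast
      ultimately show "f x \<noteq> f y" using \<open>x \<in> e\<close> \<open>y \<in> e\<close> \<open>x \<noteq> y\<close>
        by auto
    qed
  qed
qed

lemma proper_theta:
  assumes "3 \<le> n"
  shows "proper (theta_E 2 n 2) f \<longleftrightarrow>
    f End0 \<noteq> f (Inner 1 1) \<and> f (Inner 1 1) \<noteq> f End1 \<and>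
    f End0 \<noteq> f (Inner 3 1) \<and> f (Inner 3 1) \<noteq> f End1 \<and>
    (\<forall>j<n. f (pv2 n j) \<noteq> f (pv2 n (Suc j)))"
proof -
  have two: "\<And>P. (\<forall>j<(2::nat). P j) \<longleftrightarrow> P 0 \<and> P 1"
    by (auto simp: less_Suc_eq numeral_2_eq_2)
  show ?thesis
    unfolding proper_gen[OF assms]
    by (simp add: two theta_len_def theta_pv_def) blast
qed

lemma succ_upt:
  "(\<forall>j<n. h j \<noteq> h (Suc j)) \<longleftrightarrow> successively (\<noteq>) (map h [0..<Suc n])"
  unfolding successively_conv_nth by (simp del: upt_Suc add: nth_map)

lemma pathlist:
  assumes "1 \<le> n"
  shows "map (\<lambda>j. f (pv2 n j)) [0..<Suc n] = f End0 # map (\<lambda>j. f (Inner 2 j)) [1..<n] @ [f End1]"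
proof -
  have "[0..<Suc n] = 0 # [1..<n] @ [n]" using assms
    by (simp add: upt_conv_Cons)
  moreover have "map (\<lambda>j. f (pv2 n j)) [1..<n] = map (\<lambda>j. f (Inner 2 j)) [1..<n]"
    by (rule map_cong) (auto simp: theta_pv_def theta_len_def)
  ultimately show ?thesis using assms
    by (simp add: theta_pv_def theta_len_def)
qed

definition projf :: "nat \<Rightarrow> (theta_vertex \<Rightarrow> nat) \<Rightarrow> nat \<times> nat \<times> nat \<times> nat \<times> nat list" where
  "projf n f = (f End0, f End1, f (Inner 1 1), f (Inner 3 1), map (\<lambda>j. f (Inner 2 j)) [1..<n])"

definition buildf :: "nat \<Rightarrow> nat \<times> nat \<times> nat \<times> nat \<times> nat list \<Rightarrow> theta_vertex \<Rightarrow> nat" where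
  "buildf n t v = (case t of (c, d, x, y, xs) \<Rightarrow> (case v of End0 \<Rightarrow> c | End1 \<Rightarrow> d
     | Inner i j \<Rightarrow> if i = 1 \<and> j = 1 then x else if i = 3 \<and> j = 1 then y
        else if i = 2 \<and> 1 \<le> j \<and> j < n then xs ! (j - 1) else undefined))"

definition Tset :: "nat \<Rightarrow> (theta_vertex \<Rightarrow> nat set) \<Rightarrow> (nat \<times> nat \<times> nat \<times> nat \<times> nat list) set" where
  "Tset n L = (SIGMA c:L End0. SIGMA d:L End1. (L (Inner 1 1) - {c,d}) \<times> (L (Inner 3 1) - {c,d})
      \<times> PathCol c (map (\<lambda>j. L (Inner 2 j)) [1..<n]) d)"

lemma build_proj:
  assumes "f \<in> Pi\<^sub>E (theta_V 2 n 2) L"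
  shows "buildf n (projf n f) = f"
proof
  fix v show "buildf n (projf n f) v = f v"
  proof (cases v)
    case End0 then show ?thesis by (simp add: buildf_def projf_def)
  next
    case End1 then show ?thesis by (simp add: buildf_def projf_def)
  next
    case (Inner i j)
    show ?thesis
    proof (cases "v \<in> theta_V 2 n 2")
      case True
      then show ?thesis using Inner by (auto simp: mem_V buildf_def projf_def nth_map)
    next
      case False
      then have "f v = undefined" using assms by (simp add: PiE_def extensional_def)
      then show ?thesis using Inner False by (auto simp: mem_V buildf_def projf_def)
    qed
  qed
qed

lemma proj_build:
  assumes "length xs = n - 1"
  shows "projf n (buildf n (c, d, x, y, xs)) = (c, d, x, y, xs)"
proof -
  have "map (\<lambda>j. buildf n (c, d, x, y, xs) (Inner 2 j)) [1..<n] = xs"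
    by (rule nth_equalityI) (use assms in \<open>auto simp: buildf_def\<close>)
  then show ?thesis by (simp add: projf_def buildf_def)
qed

lemma map_build:
  assumes "length xs = n - 1"
  shows "map (\<lambda>j. buildf n (c, d, x, y, xs) (Inner 2 j)) [1..<n] = xs"
  using proj_build[OF assms, of c d x y] by (simp add: projf_def)

lemma count_formula:
  assumes n3: "3 \<le> n" and fin: "\<forall>v\<in>theta_V 2 n 2. finite (L v)"
  shows "P_list (theta_V 2 n 2) (theta_E 2 n 2) L =
    (\<Sum>c\<in>L End0. \<Sum>d\<in>L End1. card (L (Inner 1 1) - {c,d}) * card (L (Inner 3 1) - {c,d})
        * walks c (map (\<lambda>j. L (Inner 2 j)) [1..<n]) d)"
proof -
  define V where "V = theta_V 2 n 2"
  define S where "S = {f \<in> Pi\<^sub>E V L. proper (theta_E 2 n 2) f}"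
  define Ls where "Ls = map (\<lambda>j. L (Inner 2 j)) [1..<n]"
  have inV: "End0 \<in> V" "End1 \<in> V" "Inner 1 1 \<in> V" "Inner 3 1 \<in> V"
    "\<And>j. 1 \<le> j \<Longrightarrow> j < n \<Longrightarrow> Inner 2 j \<in> V"
    by (auto simp: V_def mem_V)
  have finLs: "\<forall>L\<in>set Ls. finite L" using fin inV(5) by (auto simp: Ls_def V_def)
  have lenLs: "length Ls = n - 1" by (simp add: Ls_def)
  have bij: "bij_betw (projf n) S (Tset n L)"
  proof (rule bij_betw_byWitness[where f' = "buildf n"])
    show "\<forall>f\<in>S. buildf n (projf n f) = f"
      using build_proj by (auto simp: S_def V_def)
    show "\<forall>t\<in>Tset n L. projf n (buildf n t) = t"
    proof
      fix t assume "t \<in> Tset n L"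
      then obtain c d x y xs where t: "t = (c, d, x, y, xs)" and xs: "xs \<in> PathCol c Ls d"
        unfolding Tset_def Ls_def by blast
      have "length xs = n - 1" using xs lenLs by (auto simp: PathCol_def dest: list_all2_lengthD)
      then show "projf n (buildf n t) = t" using t proj_build by simp
    qed
    show "projf n ` S \<subseteq> Tset n L"
    proof
      fix t assume "t \<in> projf n ` S"
      then obtain f where f: "f \<in> Pi\<^sub>E V L" "proper (theta_E 2 n 2) f" and t: "t = projf n f"
        unfolding S_def by blast
      note pr = f(2)[unfolded proper_theta[OF n3]]
      have mem: "\<And>v. v \<in> V \<Longrightarrow> f v \<in> L v" using f(1) by auto
      have la: "list_all2 (\<lambda>x L. x \<in> L) (map (\<lambda>j. f (Inner 2 j)) [1..<n]) Ls"
        unfolding Ls_def by (simp add: list_all2_map1 list_all2_map2 list_all2_same mem inV(5))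
      have "successively (\<noteq>) (map (\<lambda>j. f (pv2 n j)) [0..<Suc n])"
        using pr succ_upt by blast
      then have sc: "successively (\<noteq>) (f End0 # map (\<lambda>j. f (Inner 2 j)) [1..<n] @ [f End1])"
        using pathlist[of n f] n3 by simp
      show "t \<in> Tset n L"
        unfolding t projf_def Tset_def
        using mem inV pr la sc by (auto simp: PathCol_def Ls_def)
    qed
    show "buildf n ` Tset n L \<subseteq> S"
    proof
      fix g assume "g \<in> buildf n ` Tset n L"
      then obtain c d x y xs where g: "g = buildf n (c, d, x, y, xs)"
        and c: "c \<in> L End0" and d: "d \<in> L End1"
        and x: "x \<in> L (Inner 1 1) - {c,d}" and y: "y \<in> L (Inner 3 1) - {c,d}"
        and xs: "xs \<in> PathCol c Ls d"
        unfolding Tset_def Ls_def by blast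
      have la: "list_all2 (\<lambda>x L. x \<in> L) xs Ls" and sc: "successively (\<noteq>) (c # xs @ [d])"
        using xs by (auto simp: PathCol_def)
      have len: "length xs = n - 1" using la lenLs by (auto dest: list_all2_lengthD)
      have xsi: "\<And>i. i < n - 1 \<Longrightarrow> xs ! i \<in> L (Inner 2 (Suc i))"
        using la len unfolding list_all2_conv_all_nth Ls_def by (auto simp: nth_map)
      have gv: "\<forall>v\<in>V. g v \<in> L v"
      proof
        fix v assume "v \<in> V"
        then consider "v = End0" | "v = End1" | "v = Inner 1 1" | "v = Inner 3 1"
          | j where "v = Inner 2 j" "1 \<le> j" "j < n"
          unfolding V_def mem_V by blast
        then show "g v \<in> L v"
        proof cases
          case 5
          have "j - 1 < n - 1" using 5 by linarith
          then have "xs ! (j - 1) \<in> L (Inner 2 (Suc (j - 1)))" using xsi by blast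
          moreover have "Suc (j - 1) = j" using 5 by linarith
          ultimately show ?thesis using 5 by (simp add: g buildf_def)
        qed (use c d x y in \<open>auto simp: g buildf_def\<close>)
      qed
      have ext: "g \<in> extensional V"
        unfolding extensional_def
      proof (intro CollectI allI impI)
        fix v assume "v \<notin> V"
        then show "g v = undefined"
          by (cases v) (auto simp: g buildf_def V_def mem_V)
      qed
      have "map (\<lambda>j. g (pv2 n j)) [0..<Suc n] = c # xs @ [d]"
        using pathlist[of n g] n3 map_build[OF len] by (simp add: g buildf_def)
      then have "\<forall>j<n. g (pv2 n j) \<noteq> g (pv2 n (Suc j))" using sc succ_upt by metis
      then have "proper (theta_E 2 n 2) g"
        unfolding proper_theta[OF n3] using x y by (simp add: g buildf_def)
      then show "g \<in> S" using gv ext by (simp add: S_def PiE_iff)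
    qed
  qed
  have "P_list (theta_V 2 n 2) (theta_E 2 n 2) L = card S"
    by (simp add: P_list_def S_def V_def)
  also have "\<dots> = card (Tset n L)" using bij by (rule bij_betw_same_card)
  also have "\<dots> = (\<Sum>c\<in>L End0. \<Sum>d\<in>L End1. card (L (Inner 1 1) - {c,d}) * card (L (Inner 3 1) - {c,d})
        * walks c Ls d)"
    unfolding Tset_def Ls_def[symmetric]
    using fin inV card_PathCol[OF finLs]
    by (simp add: V_def card_cartesian_product mult.assoc)
  finally show ?thesis by (simp add: Ls_def)
qed

lemma card_diff2_ge:
  assumes "finite C" "card C = 3"
  shows "1 \<le> card (C - {c, d})" "c = d \<Longrightarrow> 2 \<le> card (C - {c, d})"
proof -
  have "card C - card {c, d} \<le> card (C - {c, d})" by (rule diff_card_le_card_Diff) simp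
  moreover have "card {c, d} \<le> 2" by (simp add: card_insert_le_m1)
  ultimately show "1 \<le> card (C - {c, d})" using assms by linarith
  assume "c = d"
  have "card C - card {c} \<le> card (C - {c})" by (rule diff_card_le_card_Diff) simp
  then show "2 \<le> card (C - {c, d})" using assms \<open>c = d\<close> by simp
qed

lemma prod_ge1: "1 \<le> (a::nat) \<Longrightarrow> 1 \<le> b \<Longrightarrow> a + b \<le> a * b + 1"
proof -
  assume "1 \<le> a" "1 \<le> b"
  then obtain a' b' where "a = Suc a'" "b = Suc b'" by (metis Suc_le_D One_nat_def)
  then show ?thesis by simp
qed

lemma prod_ge2: "2 \<le> (a::nat) \<Longrightarrow> 2 \<le> b \<Longrightarrow> a + b + 1 \<le> a * b + 1"
proof -
  assume "2 \<le> a" "2 \<le> b"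
  then obtain a' b' where "a = Suc (Suc a')" "b = Suc (Suc b')"
    by (metis add_2_eq_Suc le_Suc_ex)
  then show ?thesis by simp
qed

lemma double_count:
  assumes "finite A" "finite B" "finite C"
  shows "(\<Sum>c\<in>A. \<Sum>d\<in>B. card (C - {c, d})) = (\<Sum>x\<in>C. card (A - {x}) * card (B - {x}))"
proof -
  have "(\<Sum>c\<in>A. \<Sum>d\<in>B. card (C - {c, d})) = card (SIGMA c:A. SIGMA d:B. C - {c, d})"
    using assms by simp
  also have "\<dots> = card ((\<lambda>(c, d, x). (x, c, d)) ` (SIGMA c:A. SIGMA d:B. C - {c, d}))"
    by (rule card_image[symmetric]) (auto simp: inj_on_def)
  also have "(\<lambda>(c, d, x). (x, c, d)) ` (SIGMA c:A. SIGMA d:B. C - {c, d}) = (SIGMA x:C. (A - {x}) \<times> (B - {x}))"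
    by (auto simp: image_iff) 
  also have "card \<dots> = (\<Sum>x\<in>C. card (A - {x}) * card (B - {x}))"
    using assms by (simp add: card_cartesian_product)
  finally show ?thesis .
qed

lemma sum_ind_card: "finite A \<Longrightarrow> (\<Sum>x\<in>A. if P x then 1 else 0) = card {x\<in>A. P x}"
  by (simp add: sum.inter_filter[symmetric])

lemma alpha_sum:
  assumes "finite Lu" "finite Lw" "finite La" "card Lu = 3" "card Lw = 3" "card La = 3"
  shows "18 \<le> (\<Sum>c\<in>Lu. \<Sum>d\<in>Lw. card (La - {c, d})) + 2 * card (Lu \<inter> Lw)"
proof -
  have t: "\<And>x. 6 \<le> card (Lu - {x}) * card (Lw - {x}) + 2 * (if x \<in> Lu \<and> x \<in> Lw then 1 else 0)"
    using assms by (auto simp: card_Diff_singleton_if)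
  have "18 = (\<Sum>x\<in>La. (6::nat))" using assms by simp
  also have "\<dots> \<le> (\<Sum>x\<in>La. card (Lu - {x}) * card (Lw - {x}) + 2 * (if x \<in> Lu \<and> x \<in> Lw then 1 else 0))"
    by (rule sum_mono) (rule t)
  also have "\<dots> = (\<Sum>x\<in>La. card (Lu - {x}) * card (Lw - {x})) + 2 * card {x\<in>La. x \<in> Lu \<and> x \<in> Lw}"
    using assms by (simp add: sum.distrib sum_distrib_left[symmetric] sum_ind_card)
  also have "\<dots> \<le> (\<Sum>c\<in>Lu. \<Sum>d\<in>Lw. card (La - {c, d})) + 2 * card (Lu \<inter> Lw)"
  proof -
    have "card {x\<in>La. x \<in> Lu \<and> x \<in> Lw} \<le> card (Lu \<inter> Lw)"
      by (rule card_mono) (use assms in auto)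
    then show ?thesis using double_count[of Lu Lw La] assms by simp
  qed
  finally show ?thesis .
qed

lemma C4_bound:
  assumes "finite Lu" "finite Lw" "finite La" "finite Lb"
    "card Lu = 3" "card Lw = 3" "card La = 3" "card Lb = 3"
  shows "18 \<le> (\<Sum>c\<in>Lu. \<Sum>d\<in>Lw. card (La - {c, d}) * card (Lb - {c, d}))"
proof -
  let ?a = "\<lambda>c d. card (La - {c, d})" and ?b = "\<lambda>c d. card (Lb - {c, d})"
  have pt: "\<And>c d. ?a c d + ?b c d + (if c = d then 1 else 0) \<le> ?a c d * ?b c d + 1"
  proof -
    fix c d
    show "?a c d + ?b c d + (if c = d then 1 else 0) \<le> ?a c d * ?b c d + 1"
    proof (cases "c = d")
      case True
      then show ?thesis using prod_ge2 card_diff2_ge(2)[of La c d] card_diff2_ge(2)[of Lb c d] assms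
        by simp
    next
      case False
      then show ?thesis using prod_ge1 card_diff2_ge(1)[of La c d] card_diff2_ge(1)[of Lb c d] assms
        by simp
    qed
  qed
  have s1: "(\<Sum>c\<in>Lu. \<Sum>d\<in>Lw. ?a c d + ?b c d + (if c = d then 1 else 0))
     \<le> (\<Sum>c\<in>Lu. \<Sum>d\<in>Lw. ?a c d * ?b c d + 1)"
    by (intro sum_mono pt)
  have s2: "(\<Sum>c\<in>Lu. \<Sum>d\<in>Lw. (if c = d then 1 else 0)::nat) = card (Lu \<inter> Lw)"
    using assms by (simp add: sum_ind_card[symmetric] Int_def)
  have s3: "(\<Sum>c\<in>Lu. \<Sum>d\<in>Lw. (1::nat)) = 9" using assms by simp
  have sLw: "card (Lu \<inter> Lw) \<le> 3" using assms card_mono[of Lu "Lu \<inter> Lw"] by auto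
  have A: "18 \<le> (\<Sum>c\<in>Lu. \<Sum>d\<in>Lw. ?a c d) + 2 * card (Lu \<inter> Lw)"
    using alpha_sum assms by blast
  have B: "18 \<le> (\<Sum>c\<in>Lu. \<Sum>d\<in>Lw. ?b c d) + 2 * card (Lu \<inter> Lw)"
    using alpha_sum assms by blast
  from s1 have "(\<Sum>c\<in>Lu. \<Sum>d\<in>Lw. ?a c d) + (\<Sum>c\<in>Lu. \<Sum>d\<in>Lw. ?b c d) + card (Lu \<inter> Lw)
      \<le> (\<Sum>c\<in>Lu. \<Sum>d\<in>Lw. ?a c d * ?b c d) + 9"
    unfolding sum.distrib s2 s3 .
  then show ?thesis using A B sLw by linarith
qed

lemma KN: "1 \<le> (K::nat) \<Longrightarrow> m \<le> N \<Longrightarrow> K * m + N \<le> K * N + m"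
proof -
  assume K: "1 \<le> K" and "m \<le> N"
  then obtain e where N: "N = m + e" using le_Suc_ex by blast
  have "1 * e \<le> K * e" using K by (rule mult_le_mono1)
  then show ?thesis unfolding N by (simp add: algebra_simps)
qed

lemma per_d:
  assumes "finite A" "card A = 3" "\<forall>c\<in>A. 1 \<le> K c" "\<forall>c. m \<le> (N c::nat)"
    "\<forall>c c'. c \<noteq> c' \<longrightarrow> 2 * m + 1 \<le> N c + N c'"
  shows "m * (\<Sum>c\<in>A. K c) + 2 \<le> (\<Sum>c\<in>A. K c * N c)"
proof -
  obtain p q r where A: "A = {p, q, r}" and d: "p \<noteq> q" "q \<noteq> r" "p \<noteq> r"
    using assms(2) by (auto simp: card_3_iff)
  have k: "1 \<le> K p" "1 \<le> K q" "1 \<le> K r" using assms(3) A by auto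
  have kn: "K p * m + N p \<le> K p * N p + m" "K q * m + N q \<le> K q * N q + m"
    "K r * m + N r \<le> K r * N r + m"
    using KN k assms(4) by blast+
  have pr: "2 * m + 1 \<le> N p + N q" "2 * m + 1 \<le> N q + N r" "2 * m + 1 \<le> N p + N r"
    using assms(5) d by auto
  have "m * (K p + K q + K r) + 2 \<le> K p * N p + K q * N q + K r * N r"
    using kn pr by (simp add: algebra_simps)
  then show ?thesis using A d by (simp add: add.assoc)
qed

lemma lower_bound:
  assumes fin: "finite Lu" "finite Lw" "finite La" "finite Lb"
    and c3: "card Lu = 3" "card Lw = 3" "card La = 3" "card Lb = 3"
    and Ls: "\<forall>L\<in>set Ls. card L = 3" "even (length Ls)"
  shows "18 * mm (length Ls) + 6 \<le>
    (\<Sum>c\<in>Lu. \<Sum>d\<in>Lw. card (La - {c, d}) * card (Lb - {c, d}) * walks c Ls d)"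
proof -
  define m where "m = mm (length Ls)"
  define K where "K = (\<lambda>c d. card (La - {c, d}) * card (Lb - {c, d}))"
  have inv: "\<And>d. (\<forall>c. m \<le> walks c Ls d) \<and> (\<forall>c c'. c \<noteq> c' \<longrightarrow> 2 * m + 1 \<le> walks c Ls d + walks c' Ls d)"
    using walks_inv[OF Ls(1)] Ls(2) unfolding m_def by auto
  have K1: "\<And>c d. 1 \<le> K c d"
    unfolding K_def using card_diff2_ge(1) fin c3 by (metis One_nat_def mult_le_mono one_le_mult_iff)
  have pd: "\<And>d. m * (\<Sum>c\<in>Lu. K c d) + 2 \<le> (\<Sum>c\<in>Lu. K c d * walks c Ls d)"
    by (rule per_d) (use fin c3 K1 inv in auto)
  have X: "18 \<le> (\<Sum>d\<in>Lw. \<Sum>c\<in>Lu. K c d)"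
    using C4_bound[OF fin c3] unfolding K_def by (simp add: sum.swap[of _ Lu])
  have "18 * m + 6 \<le> m * (\<Sum>d\<in>Lw. \<Sum>c\<in>Lu. K c d) + (\<Sum>d\<in>Lw. (2::nat))"
    using X c3 by simp
  also have "\<dots> = (\<Sum>d\<in>Lw. m * (\<Sum>c\<in>Lu. K c d)) + (\<Sum>d\<in>Lw. 2)"
    by (simp only: sum_distrib_left)
  also have "\<dots> = (\<Sum>d\<in>Lw. m * (\<Sum>c\<in>Lu. K c d) + 2)"
    by (rule sum.distrib[symmetric])
  also have "\<dots> \<le> (\<Sum>d\<in>Lw. \<Sum>c\<in>Lu. K c d * walks c Ls d)"
    by (rule sum_mono) (rule pd)
  also have "\<dots> = (\<Sum>c\<in>Lu. \<Sum>d\<in>Lw. K c d * walks c Ls d)"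
    by (rule sum.swap)
  finally show ?thesis unfolding m_def K_def .
qed

definition C3 :: "nat set" where "C3 = {1,2,3}"

lemma walks_const:
  assumes "c \<in> C3" "d \<in> C3"
  shows "walks c (replicate k C3) d = mm k +
    (if even k then (if c \<noteq> d then 1 else 0) else (if c = d then 1 else 0))"
  using assms(1)
proof (induction k arbitrary: c)
  case 0
  then show ?case by simp
next
  case (Suc k)
  have "walks c (replicate (Suc k) C3) d = (\<Sum>z\<in>C3 - {c}. walks z (replicate k C3) d)"
    by simp
  also have "\<dots> = (\<Sum>z\<in>C3 - {c}. mm k +
    (if even k then (if z \<noteq> d then 1 else 0) else (if z = d then 1 else 0)))"
    by (rule sum.cong) (simp_all add: Suc.IH)
  finally have eq: "walks c (replicate (Suc k) C3) d = (\<Sum>z\<in>C3 - {c}. mm k +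
    (if even k then (if z \<noteq> d then 1 else 0) else (if z = d then 1 else 0)))" .
  show ?case unfolding eq using Suc.prems assms(2) by (auto simp: insert_Diff_if C3_def)
qed

lemma const_value:
  assumes "even k"
  shows "(\<Sum>c\<in>C3. \<Sum>d\<in>C3. card (C3 - {c, d}) * card (C3 - {c, d})
     * walks c (replicate k C3) d) = 18 * mm k + 6"
proof -
  have "(\<Sum>c\<in>C3. \<Sum>d\<in>C3. card (C3 - {c, d}) * card (C3 - {c, d})
     * walks c (replicate k C3) d) =
     (\<Sum>c\<in>C3. \<Sum>d\<in>C3. card (C3 - {c, d}) * card (C3 - {c, d})
     * (mm k + (if c \<noteq> d then 1 else 0)))"
    by (intro sum.cong refl) (simp add: walks_const assms)
  also have "\<dots> = 18 * mm k + 6" by (simp add: insert_Diff_if C3_def)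
  finally show ?thesis .
qed

theorem lemma2p9:
  fixes l2 :: nat
  assumes "odd l2" and "3 \<le> l2"
  shows "P_list3 (theta_V 2 l2 2) (theta_E 2 l2 2) = P_chrom3 (theta_V 2 l2 2) (theta_E 2 l2 2)"
proof -
  define n where "n = l2"
  have n3: "3 \<le> n" and ev: "even (n - 1)" using assms by (auto simp: n_def)
  define m where "m = mm (n - 1)"
  have chrom: "P_chrom3 (theta_V 2 n 2) (theta_E 2 n 2) = 18 * m + 6"
  proof -
    have "P_chrom3 (theta_V 2 n 2) (theta_E 2 n 2) = P_list (theta_V 2 n 2) (theta_E 2 n 2) (\<lambda>_. C3)"
      by (simp add: P_chrom3_def C3_def)
    also have "\<dots> = (\<Sum>c\<in>C3. \<Sum>d\<in>C3. card (C3 - {c, d}) * card (C3 - {c, d})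
        * walks c (map (\<lambda>j. C3) [1..<n]) d)"
      by (rule count_formula[OF n3]) (simp add: C3_def)
    also have "map (\<lambda>j. C3) [1..<n] = replicate (n - 1) C3"
      by (simp add: map_replicate_const)
    also have "(\<Sum>c\<in>C3. \<Sum>d\<in>C3. card (C3 - {c, d}) * card (C3 - {c, d})
        * walks c (replicate (n - 1) C3) d) = 18 * m + 6"
      unfolding m_def by (rule const_value[OF ev])
    finally show ?thesis .
  qed
  have lower: "18 * m + 6 \<le> P_list (theta_V 2 n 2) (theta_E 2 n 2) L"
    if L: "three_assignment (theta_V 2 n 2) L" for L
  proof -
    have c3: "\<And>v. v \<in> theta_V 2 n 2 \<Longrightarrow> card (L v) = 3"
      using L by (simp add: three_assignment_def)
    have fin: "\<forall>v\<in>theta_V 2 n 2. finite (L v)"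
      using c3 by (metis card.infinite zero_neq_numeral)
    have inV: "End0 \<in> theta_V 2 n 2" "End1 \<in> theta_V 2 n 2" "Inner 1 1 \<in> theta_V 2 n 2"
      "Inner 3 1 \<in> theta_V 2 n 2" "\<And>j. 1 \<le> j \<Longrightarrow> j < n \<Longrightarrow> Inner 2 j \<in> theta_V 2 n 2"
      by (auto simp: mem_V)
    have Ls: "\<forall>A\<in>set (map (\<lambda>j. L (Inner 2 j)) [1..<n]). card A = 3"
      using c3 inV(5) by auto
    have len: "length (map (\<lambda>j. L (Inner 2 j)) [1..<n]) = n - 1" by simp
    have "18 * mm (length (map (\<lambda>j. L (Inner 2 j)) [1..<n])) + 6 \<le>
      (\<Sum>c\<in>L End0. \<Sum>d\<in>L End1. card (L (Inner 1 1) - {c, d}) * card (L (Inner 3 1) - {c, d})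
        * walks c (map (\<lambda>j. L (Inner 2 j)) [1..<n]) d)"
      by (rule lower_bound) (use fin inV c3 Ls ev in auto)
    also have "\<dots> = P_list (theta_V 2 n 2) (theta_E 2 n 2) L"
      by (rule count_formula[OF n3 fin, symmetric])
    finally show ?thesis unfolding len m_def .
  qed
  have mem: "18 * m + 6 \<in> {P_list (theta_V 2 n 2) (theta_E 2 n 2) L | L. three_assignment (theta_V 2 n 2) L}"
  proof -
    have "three_assignment (theta_V 2 n 2) (\<lambda>_. {1,2,3})" by (simp add: three_assignment_def)
    moreover have "P_list (theta_V 2 n 2) (theta_E 2 n 2) (\<lambda>_. {1,2,3}) = 18 * m + 6"
      using chrom by (simp add: P_chrom3_def)
    ultimately show ?thesis unfolding mem_Collect_eq by (intro exI[of _ "\<lambda>_. {1,2,3}"]) simp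
  qed
  have "P_list3 (theta_V 2 n 2) (theta_E 2 n 2) = 18 * m + 6"
    unfolding P_list3_def by (rule cInf_eq_minimum[OF mem]) (use lower in blast)
  then show ?thesis using chrom by (simp add: n_def)
qed

end
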